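(* If $S$ is a nondegenerate $n$-dimensional simplex with $S\subset B_n$, then $\xi(B_n;S)\ge n$, and $\xi(B_n;S)=n$ holds if and only if $S$ is a regular simplex inscribed into $B_n$. Consequently $\xi_n(B_n)=n$.
   Context: $B_n$ is the closed unit Euclidean ball in $\mathbb R^n$ centered at $0$. $\xi(B_n;S)$ is the minimal $\sigma\ge1$ with $B_n\subset\sigma S$, where $\sigma S$ is the homothetic image of $S$ with center at its center of gravity and ratio $\sigma$. $\xi_n(B_n)$ is the minimum of $\xi(B_n;S)$ over all nondegenerate $n$-dimensional simplices $S\subset B_n$. A simplex is inscribed into $B_n$ if all its vertices lie on the unit sphere. *)

theory Defs
  imports "HOL-Analysis.Analysis"
begin

definition simplex_vertices :: "'a::euclidean_space set \<Rightarrow> 'a set" where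
  "simplex_vertices S = {x. x extreme_point_of S}"

definition simplex_center :: "'a::euclidean_space set \<Rightarrow> 'a" where
  "simplex_center S = (1 / real (card (simplex_vertices S))) *\<^sub>R (\<Sum>x\<in>simplex_vertices S. x)"

definition homothetic_simplex :: "real \<Rightarrow> 'a::euclidean_space set \<Rightarrow> 'a set" where
  "homothetic_simplex \<sigma> S = (\<lambda>x. simplex_center S + \<sigma> *\<^sub>R (x - simplex_center S)) ` S"

definition absorption_index :: "'a::euclidean_space set \<Rightarrow> 'a set \<Rightarrow> real" where
  "absorption_index B S = Inf {\<sigma>. 1 \<le> \<sigma> \<and> B \<subseteq> homothetic_simplex \<sigma> S}"

definition nondeg_simplex :: "'a::euclidean_space set \<Rightarrow> bool" where
  "nondeg_simplex S \<longleftrightarrow> (int DIM('a)) simplex S"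

definition xi_n_ball :: "'a::euclidean_space itself \<Rightarrow> real" where
  "xi_n_ball _ = Inf {absorption_index (cball (0::'a) 1) S | S. nondeg_simplex S \<and> S \<subseteq> cball 0 1}"

definition regular_simplex :: "'a::euclidean_space set \<Rightarrow> bool" where
  "regular_simplex S \<longleftrightarrow> (\<exists>d. \<forall>x\<in>simplex_vertices S. \<forall>y\<in>simplex_vertices S. x \<noteq> y \<longrightarrow> dist x y = d)"

definition inscribed_in_ball :: "'a::euclidean_space set \<Rightarrow> bool" where
  "inscribed_in_ball S \<longleftrightarrow> simplex_vertices S \<subseteq> sphere 0 1"

end

theory Submission imports Defs begin

lemma linear_repr:
  fixes f :: "'a::euclidean_space \<Rightarrow> real"
  assumes "linear f"
  shows "(\<Sum>b\<in>Basis. f b *\<^sub>R b) \<bullet> v = f v"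
proof -
  have "f v = f (\<Sum>b\<in>Basis. (v \<bullet> b) *\<^sub>R b)" by (simp add: euclidean_representation)
  also have "\<dots> = (\<Sum>b\<in>Basis. (v \<bullet> b) * f b)"
    using assms by (simp add: linear_sum linear_scale)
  moreover have "(\<Sum>b\<in>Basis. f b *\<^sub>R b) \<bullet> v = (\<Sum>b\<in>Basis. (v \<bullet> b) * f b)"
    unfolding inner_sum_left by (intro sum.cong refl) (simp add: inner_commute)
  ultimately show ?thesis by simp
qed

definition lam :: "('a::euclidean_space \<Rightarrow> 'a) \<Rightarrow> 'a \<Rightarrow> 'a \<Rightarrow> real" where
  "lam a j p = 1 + a j \<bullet> (p - j)"

definition dualfam :: "'a::euclidean_space set \<Rightarrow> ('a \<Rightarrow> 'a) \<Rightarrow> bool" where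
  "dualfam C a \<longleftrightarrow> (\<forall>j\<in>C. \<forall>i\<in>C. i \<noteq> j \<longrightarrow> a j \<bullet> (i - j) = -1)"

lemma dualfam_exists:
  fixes C :: "'a::euclidean_space set"
  assumes "\<not> affine_dependent C"
  shows "\<exists>a. dualfam C a"
proof -
  have "\<exists>aj. \<forall>i\<in>C. i \<noteq> j \<longrightarrow> aj \<bullet> (i - j) = -1" if "j \<in> C" for j
  proof -
    have "independent ((\<lambda>x. -j + x) ` (C - {j}))"
      using affine_dependent_iff_dependent2[OF that] assms by simp
    from real_vector.linear_independent_extend[OF this, of "\<lambda>_. -1::real"]
    obtain g where g: "linear g" "\<forall>x\<in>(\<lambda>x. -j + x) ` (C - {j}). g x = (-1::real)"
      by auto
    show ?thesis
    proof (intro exI ballI impI)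
      fix i assume "i \<in> C" "i \<noteq> j"
      then have "g (-j + i) = -1" using g(2) by blast
      then show "(\<Sum>b\<in>Basis. g b *\<^sub>R b) \<bullet> (i - j) = -1"
        using linear_repr[OF g(1)] by simp
    qed
  qed
  then have "\<forall>j\<in>C. \<exists>aj. \<forall>i\<in>C. i \<noteq> j \<longrightarrow> aj \<bullet> (i - j) = -1" by blast
  from bchoice[OF this] obtain a where "\<forall>j\<in>C. \<forall>i\<in>C. i \<noteq> j \<longrightarrow> a j \<bullet> (i - j) = -1" by blast
  then show ?thesis unfolding dualfam_def by blast
qed

lemma lam_comb:
  assumes "dualfam C a" "finite C" "j \<in> C" "sum \<mu> C = 1"
  shows "lam a j (\<Sum>i\<in>C. \<mu> i *\<^sub>R i) = \<mu> j"
proof -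
  have "(\<Sum>i\<in>C. \<mu> i *\<^sub>R i) - j = (\<Sum>i\<in>C. \<mu> i *\<^sub>R (i - j))"
    using assms(4) by (simp add: scaleR_diff_right sum_subtractf scaleR_sum_left[symmetric])
  then have "a j \<bullet> ((\<Sum>i\<in>C. \<mu> i *\<^sub>R i) - j) = (\<Sum>i\<in>C. \<mu> i * (a j \<bullet> (i - j)))"
    by (simp add: inner_sum_right)
  also have "\<dots> = (\<Sum>i\<in>C. if i = j then 0 else - \<mu> i)"
    using assms(1,3) unfolding dualfam_def by (intro sum.cong) auto
  also have "\<dots> = - (\<Sum>i\<in>C - {j}. \<mu> i)"
    using assms(2) by (simp add: sum.If_cases sum_negf Diff_eq Int_commute)
  also have "\<dots> = - (1 - \<mu> j)"
    using assms by (simp add: sum_diff1)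
  finally show ?thesis unfolding lam_def by simp
qed

lemma dualfam_all:
  fixes C :: "'a::euclidean_space set"
  assumes "dualfam C a" "finite C" "affine hull C = UNIV"
  shows "(\<Sum>j\<in>C. lam a j p) = 1" "(\<Sum>j\<in>C. lam a j p *\<^sub>R j) = p"
proof -
  obtain \<mu> where \<mu>: "sum \<mu> C = 1" "(\<Sum>i\<in>C. \<mu> i *\<^sub>R i) = p"
  proof -
    have "p \<in> affine hull C" using assms(3) by simp
    then show ?thesis using that affine_hull_finite[OF assms(2)] by auto
  qed
  have "lam a j p = \<mu> j" if "j \<in> C" for j
    using lam_comb[OF assms(1,2) that \<mu>(1)] \<mu>(2) by simp
  then show "(\<Sum>j\<in>C. lam a j p) = 1" "(\<Sum>j\<in>C. lam a j p *\<^sub>R j) = p"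
    using \<mu> by (auto intro: sum.cong)
qed

locale simp_setup =
  fixes C :: "'a::euclidean_space set" and a :: "'a \<Rightarrow> 'a"
  assumes indep: "\<not> affine_dependent C"
    and cardC: "card C = DIM('a) + 1"
    and dual: "dualfam C a"
begin

lemma finC: "finite C"
  using cardC card_ge_0_finite by force

lemma hullC: "affine hull C = UNIV"
proof -
  have "of_nat (card C) = aff_dim C + 1" using aff_dim_affine_independent[OF indep] .
  then have "aff_dim C = DIM('a)" using cardC by simp
  then show ?thesis using aff_dim_eq_full by blast
qed

lemma verts: "simplex_vertices (convex hull C) = C"
  unfolding simplex_vertices_def
  using extreme_point_of_convex_hull_affine_independent[OF indep] by auto

definition N :: real where "N = real (card C)"
definition c :: 'a where "c = simplex_center (convex hull C)"

lemma N_pos: "N > 1"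
proof -
  have "DIM('a) \<ge> 1" by (simp add: DIM_positive Suc_leI)
  then show ?thesis unfolding N_def using cardC by simp
qed

lemma c_eq: "c = (\<Sum>i\<in>C. (1/N) *\<^sub>R i)"
  unfolding c_def simplex_center_def verts N_def by (simp add: scaleR_sum_right)

lemma lam_c: "j \<in> C \<Longrightarrow> lam a j c = 1/N"
proof -
  assume j: "j \<in> C"
  have "sum (\<lambda>_. 1/N) C = 1" using N_pos unfolding N_def by simp
  from lam_comb[OF dual finC j this] show ?thesis by (simp add: c_eq)
qed

lemma lam_S: "j \<in> C \<Longrightarrow> x \<in> convex hull C \<Longrightarrow> lam a j x \<ge> 0"
proof -
  assume j: "j \<in> C" and "x \<in> convex hull C"
  then obtain u where u: "\<forall>x\<in>C. 0 \<le> u x" "sum u C = 1" "(\<Sum>x\<in>C. u x *\<^sub>R x) = x"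
    using convex_hull_finite[OF finC] by auto
  from lam_comb[OF dual finC j u(2)] u(3) have "lam a j x = u j" by simp
  then show ?thesis using u(1) j by simp
qed

lemma a_nz: "j \<in> C \<Longrightarrow> a j \<noteq> 0"
proof -
  assume j: "j \<in> C"
  have "card C \<ge> 2" using cardC DIM_positive by (simp add: Suc_leI)
  have "\<not> C \<subseteq> {j}"
  proof
    assume "C \<subseteq> {j}"
    then have "card C \<le> 1" using card_mono[of "{j}" C] by simp
    then show False using \<open>card C \<ge> 2\<close> by simp
  qed
  then obtain i where "i \<in> C" "i \<noteq> j" by auto
  then have "a j \<bullet> (i - j) = -1" using dual j unfolding dualfam_def by blast
  then show ?thesis by auto
qed

definition m :: "'a \<Rightarrow> real" where "m j = N * (norm (a j) + a j \<bullet> c)"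

lemma lam_shift: "lam a j (c + v) = lam a j c + a j \<bullet> v"
  unfolding lam_def by (simp add: algebra_simps inner_diff_right inner_add_right)

lemma cover_iff:
  assumes "\<sigma> \<ge> 1"
  shows "cball 0 1 \<subseteq> homothetic_simplex \<sigma> (convex hull C) \<longleftrightarrow> (\<forall>j\<in>C. m j \<le> \<sigma>)"
proof
  assume cov: "cball 0 1 \<subseteq> homothetic_simplex \<sigma> (convex hull C)"
  show "\<forall>j\<in>C. m j \<le> \<sigma>"
  proof
    fix j assume j: "j \<in> C"
    define y where "y = - (1 / norm (a j)) *\<^sub>R a j"
    have "y \<in> cball 0 1" using a_nz[OF j] unfolding y_def by simp
    then obtain x where x: "x \<in> convex hull C" "y = c + \<sigma> *\<^sub>R (x - c)"
      using cov unfolding homothetic_simplex_def c_def by auto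
    have "lam a j x = lam a j c + a j \<bullet> (x - c)"
      using lam_shift[of j "x - c"] by simp
    then have "a j \<bullet> (x - c) \<ge> - 1/N" using lam_S[OF j x(1)] lam_c[OF j] by simp
    then have "\<sigma> * (- 1/N) \<le> \<sigma> * (a j \<bullet> (x - c))" using assms
      by (intro mult_left_mono) auto
    then have "\<sigma> * (a j \<bullet> (x - c)) \<ge> - \<sigma>/N" by simp
    moreover have "a j \<bullet> (y - c) = \<sigma> * (a j \<bullet> (x - c))" using x(2) by simp
    moreover have "a j \<bullet> y = - norm (a j)" unfolding y_def using a_nz[OF j]
      by (simp add: power2_norm_eq_inner[symmetric] power2_eq_square)
    ultimately have "- norm (a j) - a j \<bullet> c \<ge> - \<sigma>/N" by (simp add: inner_diff_right)
    then show "m j \<le> \<sigma>" unfolding m_def using N_pos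
      by (simp add: field_simps)
  qed
next
  assume H: "\<forall>j\<in>C. m j \<le> \<sigma>"
  show "cball 0 1 \<subseteq> homothetic_simplex \<sigma> (convex hull C)"
  proof
    fix y :: 'a assume y: "y \<in> cball 0 1"
    define x where "x = c + (1/\<sigma>) *\<^sub>R (y - c)"
    have yx: "y = c + \<sigma> *\<^sub>R (x - c)" unfolding x_def using assms by simp
    have nn: "lam a j x \<ge> 0" if j: "j \<in> C" for j
    proof -
      have "a j \<bullet> y \<ge> - norm (a j)"
      proof -
        have "\<bar>a j \<bullet> y\<bar> \<le> norm (a j) * norm y" by (rule Cauchy_Schwarz_ineq2)
        moreover have "norm (a j) * norm y \<le> norm (a j)" using y
          by (simp add: mult_left_le)
        ultimately show ?thesis by linarith
      qed
      moreover have "m j / N = norm (a j) + a j \<bullet> c" unfolding m_def using N_pos by simp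
      ultimately have "a j \<bullet> (y - c) \<ge> - m j / N" by (simp add: inner_diff_right)
      moreover have "m j / N \<le> \<sigma> / N" using H j N_pos
        by (intro divide_right_mono) auto
      ultimately have "a j \<bullet> (y - c) \<ge> - \<sigma> / N" by linarith
      then have "(1/\<sigma>) * (- \<sigma> / N) \<le> (1/\<sigma>) * (a j \<bullet> (y - c))" using assms
        by (intro mult_left_mono) auto
      then have "(1/\<sigma>) * (a j \<bullet> (y - c)) \<ge> - 1/N" using assms by simp
      moreover have "lam a j x = 1/N + (1/\<sigma>) * (a j \<bullet> (y - c))"
        unfolding x_def lam_shift lam_c[OF j] by simp
      ultimately show ?thesis by simp
    qed
    have "x \<in> convex hull C"
      unfolding convex_hull_finite[OF finC] mem_Collect_eq
      by (rule exI[of _ "\<lambda>j. lam a j x"]) (use nn dualfam_all[OF dual finC hullC, of x] in auto)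
    then show "y \<in> homothetic_simplex \<sigma> (convex hull C)"
      unfolding homothetic_simplex_def c_def[symmetric] using yx by blast
  qed
qed


lemma N_ge2: "N \<ge> 2"
proof -
  have "DIM('a) \<ge> 1" by (simp add: DIM_positive Suc_leI)
  then show ?thesis unfolding N_def using cardC by simp
qed

lemma C_ne: "C \<noteq> {}" using cardC by auto

lemma absorb: "absorption_index (cball 0 1) (convex hull C) = max 1 (Max (m ` C))"
proof -
  have "{\<sigma>. 1 \<le> \<sigma> \<and> cball 0 1 \<subseteq> homothetic_simplex \<sigma> (convex hull C)} = {max 1 (Max (m ` C))..}"
  proof (intro set_eqI iffI)
    fix \<sigma> assume "\<sigma> \<in> {\<sigma>. 1 \<le> \<sigma> \<and> cball 0 1 \<subseteq> homothetic_simplex \<sigma> (convex hull C)}"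
    then have "1 \<le> \<sigma>" "\<forall>j\<in>C. m j \<le> \<sigma>" using cover_iff by auto
    then show "\<sigma> \<in> {max 1 (Max (m ` C))..}" using finC C_ne by simp
  next
    fix \<sigma> assume "\<sigma> \<in> {max 1 (Max (m ` C))..}"
    then have "1 \<le> \<sigma>" "\<forall>j\<in>C. m j \<le> \<sigma>" using finC C_ne by auto
    then show "\<sigma> \<in> {\<sigma>. 1 \<le> \<sigma> \<and> cball 0 1 \<subseteq> homothetic_simplex \<sigma> (convex hull C)}"
      using cover_iff by auto
  qed
  then show ?thesis unfolding absorption_index_def by simp
qed

lemma sum_ajj: "(\<Sum>j\<in>C. a j \<bullet> j) = N - 1"
proof -
  have "(\<Sum>j\<in>C. lam a j 0) = 1" using dualfam_all(1)[OF dual finC hullC] .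
  then have "(\<Sum>j\<in>C. 1 - a j \<bullet> j) = 1" unfolding lam_def by simp
  then show ?thesis unfolding N_def by (simp add: sum_subtractf)
qed

lemma ajc: "j \<in> C \<Longrightarrow> a j \<bullet> c = 1/N - 1 + a j \<bullet> j"
  using lam_c[of j] unfolding lam_def by (simp add: inner_diff_right)

lemma sum_m: "(\<Sum>j\<in>C. m j) = N * (\<Sum>j\<in>C. norm (a j))"
proof -
  have "(\<Sum>j\<in>C. a j \<bullet> c) = (\<Sum>j\<in>C. 1/N - 1 + a j \<bullet> j)" using ajc by (intro sum.cong) auto
  also have "\<dots> = N * (1/N - 1) + (N - 1)" using sum_ajj unfolding N_def by (simp add: sum.distrib)
  also have "\<dots> = 0" using N_pos by (simp add: field_simps)
  finally have "(\<Sum>j\<in>C. a j \<bullet> c) = 0" .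
  then show ?thesis unfolding m_def by (simp add: sum_distrib_left[symmetric] sum.distrib)
qed

lemma norm_ge: "j \<in> C \<Longrightarrow> C \<subseteq> cball 0 1 \<Longrightarrow> a j \<bullet> j \<le> norm (a j)"
proof -
  assume "j \<in> C" "C \<subseteq> cball 0 1"
  then have "norm j \<le> 1" by auto
  have "a j \<bullet> j \<le> norm (a j) * norm j" by (rule norm_cauchy_schwarz)
  also have "\<dots> \<le> norm (a j)" using \<open>norm j \<le> 1\<close> by (simp add: mult_left_le)
  finally show ?thesis .
qed

lemma Max_ge_avg: "N * Max (m ` C) \<ge> (\<Sum>j\<in>C. m j)"
proof -
  have "(\<Sum>j\<in>C. m j) \<le> (\<Sum>j\<in>C. Max (m ` C))"
    using finC by (intro sum_mono) simp
  then show ?thesis unfolding N_def by simp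
qed

lemma lower:
  assumes "C \<subseteq> cball 0 1"
  shows "max 1 (Max (m ` C)) \<ge> N - 1"
proof -
  have "(\<Sum>j\<in>C. norm (a j)) \<ge> (\<Sum>j\<in>C. a j \<bullet> j)"
    using norm_ge assms by (intro sum_mono) auto
  then have "(\<Sum>j\<in>C. norm (a j)) \<ge> N - 1" using sum_ajj by simp
  then have "N * Max (m ` C) \<ge> N * (N - 1)" using Max_ge_avg sum_m N_pos
    by (smt (verit) mult_left_mono)
  then have "Max (m ` C) \<ge> N - 1" using N_pos by simp
  then show ?thesis by simp
qed

lemma unit_eq:
  fixes x v :: 'a
  assumes "norm x \<le> 1" "v \<noteq> 0" "v \<bullet> x = norm v"
  shows "x = (1 / norm v) *\<^sub>R v"
proof -
  define u where "u = (1 / norm v) *\<^sub>R v"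
  have u1: "u \<bullet> u = 1" unfolding u_def using assms(2)
    by (simp add: dot_square_norm power2_eq_square)
  have ux: "u \<bullet> x = 1" unfolding u_def using assms(2,3) by simp
  have "(norm (u - x))^2 = u \<bullet> u - 2 * (u \<bullet> x) + x \<bullet> x"
    unfolding power2_norm_eq_inner by (simp add: inner_diff_left inner_diff_right inner_commute)
  also have "\<dots> = (norm x)^2 - 1" using u1 ux by (simp add: dot_square_norm)
  also have "\<dots> \<le> 0" using assms(1) norm_ge_zero[of x]
    by (simp add: power_le_one)
  finally have "u = x" by simp
  then show ?thesis unfolding u_def by simp
qed

lemma eq_imp:
  assumes sub: "C \<subseteq> cball 0 1" and eq: "max 1 (Max (m ` C)) = N - 1"
  shows "regular_simplex (convex hull C) \<and> inscribed_in_ball (convex hull C)"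
proof -
  have mle: "m j \<le> N - 1" if "j \<in> C" for j
  proof -
    have "m j \<le> Max (m ` C)" using finC that by simp
    then show ?thesis using eq by linarith
  qed
  have "(\<Sum>j\<in>C. norm (a j)) \<ge> (\<Sum>j\<in>C. a j \<bullet> j)"
    using norm_ge sub by (intro sum_mono) auto
  then have sN: "(\<Sum>j\<in>C. norm (a j)) \<ge> N - 1" using sum_ajj by simp
  have "(\<Sum>j\<in>C. (N - 1) - m j) = N * (N - 1) - (\<Sum>j\<in>C. m j)"
    unfolding N_def by (simp add: sum_subtractf)
  also have "\<dots> \<le> 0" using sN sum_m N_pos by (simp add: mult_left_mono)
  finally have "(\<Sum>j\<in>C. (N - 1) - m j) \<le> 0" .
  then have "\<forall>j\<in>C. (N - 1) - m j = 0"
    using sum_nonneg_eq_0_iff[OF finC, of "\<lambda>j. (N - 1) - m j"] mle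
    by (smt (verit, best) sum_nonneg)
  then have meq: "\<forall>j\<in>C. m j = N - 1" by simp
  then have "(\<Sum>j\<in>C. m j) = N * (N - 1)" unfolding N_def by simp
  then have sN2: "(\<Sum>j\<in>C. norm (a j)) = N - 1" using sum_m N_pos by simp
  have "(\<Sum>j\<in>C. norm (a j) - a j \<bullet> j) = 0" using sN2 sum_ajj by (simp add: sum_subtractf)
  then have "\<forall>j\<in>C. norm (a j) - a j \<bullet> j = 0"
    using sum_nonneg_eq_0_iff[OF finC, of "\<lambda>j. norm (a j) - a j \<bullet> j"] norm_ge[OF _ sub] by simp
  then have naj: "\<forall>j\<in>C. a j \<bullet> j = norm (a j)" by simp
  have jform: "j = (1 / norm (a j)) *\<^sub>R a j" if "j \<in> C" for j
    using unit_eq[of j "a j"] that sub naj a_nz by auto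
  have nj: "norm j = 1" if "j \<in> C" for j
    using arg_cong[OF jform[OF that], of norm] a_nz[OF that] by simp
  have ajform: "a j = norm (a j) *\<^sub>R j" if "j \<in> C" for j
    using arg_cong[OF jform[OF that], of "\<lambda>x. norm (a j) *\<^sub>R x"] a_nz[OF that] by simp
  have na: "norm (a j) = (N - 1) / N" if "j \<in> C" for j
  proof -
    have "m j = N * (2 * norm (a j) + 1/N - 1)" unfolding m_def using ajc[OF that] naj that by simp
    then have e: "N * (2 * norm (a j) + 1/N - 1) = N - 1" using meq that by simp
    have "N * (2 * norm (a j) + 1/N - 1) = 2 * (N * norm (a j)) + 1 - N"
      using N_pos by (simp add: algebra_simps)
    then have "N * norm (a j) = N - 1" using e by linarith
    then show ?thesis using N_pos by (simp add: eq_divide_eq mult.commute)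
  qed
  have ij: "i \<bullet> j = 1 - N / (N - 1)" if "i \<in> C" "j \<in> C" "i \<noteq> j" for i j
  proof -
    have "a j \<bullet> (i - j) = -1" using dual that unfolding dualfam_def by blast
    then have "norm (a j) * (j \<bullet> i - j \<bullet> j) = -1"
      by (subst (asm) ajform[OF that(2)]) (simp add: inner_diff_right right_diff_distrib)
    moreover have "j \<bullet> j = 1" using nj[OF that(2)] by (simp add: power2_norm_eq_inner[symmetric])
    ultimately have "((N - 1) / N) * (j \<bullet> i - 1) = -1" using na[OF that(2)] by simp
    then show ?thesis using N_pos by (simp add: field_simps inner_commute)
  qed
  have "dist i j = sqrt (2 * N / (N - 1))" if "i \<in> C" "j \<in> C" "i \<noteq> j" for i j
  proof -
    have "(dist i j)^2 = i \<bullet> i - 2 * (i \<bullet> j) + j \<bullet> j"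
      unfolding dist_norm power2_norm_eq_inner by (simp add: inner_diff_left inner_diff_right inner_commute)
    also have "\<dots> = 2 * N / (N - 1)"
      using ij[OF that] nj[OF that(1)] nj[OF that(2)] N_pos
      by (simp add: power2_norm_eq_inner[symmetric] field_simps)
    finally show ?thesis by (metis zero_le_dist real_sqrt_unique)
  qed
  then show ?thesis unfolding regular_simplex_def inscribed_in_ball_def verts
    using nj by auto
qed

lemma reg_imp:
  assumes "\<forall>j\<in>C. norm j = 1" "\<forall>j\<in>C. a j = k *\<^sub>R j"
  shows "max 1 (Max (m ` C)) = N - 1"
proof -
  have jj: "j \<bullet> j = 1" if "j \<in> C" for j
    using assms(1) that by (simp add: power2_norm_eq_inner[symmetric])
  have "(\<Sum>j\<in>C. a j \<bullet> j) = N * k" unfolding N_def using assms(2) jj by simp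
  then have kv: "k = (N - 1) / N" using sum_ajj N_pos by (simp add: field_simps)
  then have kpos: "k \<ge> 0" using N_pos by simp
  have "m j = N - 1" if "j \<in> C" for j
  proof -
    have "norm (a j) = k" "a j \<bullet> j = k" using assms that kpos jj by auto
    then show ?thesis unfolding m_def using ajc[OF that] kv N_pos by (simp add: field_simps)
  qed
  then have "m ` C = {N - 1}" using C_ne by auto
  then show ?thesis using N_ge2 by simp
qed
end


lemma dualfam_indep:
  fixes C :: "'a::euclidean_space set"
  assumes fin: "finite C" and d: "dualfam C a"
  shows "\<not> affine_dependent C"
proof
  assume "affine_dependent C"
  then obtain U where U: "sum U C = 0" "\<exists>v\<in>C. U v \<noteq> 0" "(\<Sum>v\<in>C. U v *\<^sub>R v) = 0"
    using affine_dependent_explicit_finite[OF fin] by blast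
  have "U j = 0" if j: "j \<in> C" for j
  proof -
    define \<mu> where "\<mu> v = U v + (if v = j then 1 else 0)" for v
    have "(\<Sum>v\<in>C. \<mu> v *\<^sub>R v) = (\<Sum>v\<in>C. U v *\<^sub>R v) + (\<Sum>v\<in>C. (if v = j then 1 else 0) *\<^sub>R v)"
      unfolding \<mu>_def by (simp add: scaleR_add_left sum.distrib)
    also have "(\<Sum>v\<in>C. (if v = j then 1 else 0) *\<^sub>R v) = (\<Sum>v\<in>C. if v = j then j else 0)"
      by (intro sum.cong) auto
    also have "(\<Sum>v\<in>C. U v *\<^sub>R v) + (\<Sum>v\<in>C. if v = j then j else 0) = j" using U(3) fin j by simp
    finally have s1: "(\<Sum>v\<in>C. \<mu> v *\<^sub>R v) = j" .
    have "sum \<mu> C = 1" unfolding \<mu>_def using fin j U(1) by (simp add: sum.distrib)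
    from lam_comb[OF d fin j this] s1 have "lam a j j = \<mu> j" by simp
    then show ?thesis unfolding lam_def \<mu>_def by simp
  qed
  then show False using U(2) by blast
qed

lemma inner_b_s: "b \<in> Basis \<Longrightarrow> b \<bullet> (\<Sum>Basis :: 'a::euclidean_space) = 1"
  by (simp add: inner_sum_right inner_Basis)

lemma inner_s_s: "(\<Sum>Basis :: 'a::euclidean_space) \<bullet> (\<Sum>Basis) = real DIM('a)"
  by (simp add: inner_sum_left inner_b_s)

lemma unit_config_exists:
  "\<exists>V::'a::euclidean_space set. finite V \<and> card V = DIM('a) + 1 \<and> (\<forall>x\<in>V. x \<bullet> x = 1)
     \<and> (\<forall>x\<in>V. \<forall>y\<in>V. x \<noteq> y \<longrightarrow> x \<bullet> y = -1 / real DIM('a))"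
proof -
  define n where "n = real DIM('a)"
  have n1: "n \<ge> 1" unfolding n_def by (simp add: DIM_positive Suc_leI)
  define s :: 'a where "s = \<Sum>Basis"
  define q where "q = sqrt n"
  define \<alpha> where "\<alpha> = sqrt (1 + 1/n)"
  define \<beta> where "\<beta> = (1/q - \<alpha>)/n"
  define \<gamma> where "\<gamma> = -1/q"
  have q2: "q^2 = n" and qp: "q > 0" unfolding q_def using n1 by auto
  have a2: "\<alpha>^2 = 1 + 1/n" unfolding \<alpha>_def using n1 by (simp add: add_nonneg_nonneg)
  define w where "w b = \<alpha> *\<^sub>R b + \<beta> *\<^sub>R s" for b :: 'a
  define z where "z = \<gamma> *\<^sub>R s"
  have bs: "b \<bullet> s = 1" "s \<bullet> b = 1" if "b \<in> Basis" for b
    using inner_b_s[OF that] unfolding s_def by (auto simp: inner_commute)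
  have ss: "s \<bullet> s = n" unfolding s_def n_def by (rule inner_s_s)
  have key: "2 * \<alpha> * \<beta> + \<beta>^2 * n = -1/n"
  proof -
    have nb: "n * \<beta> = 1/q - \<alpha>" unfolding \<beta>_def using n1 by simp
    have "2 * \<alpha> * \<beta> + \<beta>^2 * n = \<beta> * (2 * \<alpha> + n * \<beta>)" by (simp add: power2_eq_square algebra_simps)
    also have "\<dots> = ((1/q - \<alpha>) * (1/q + \<alpha>)) / n" unfolding \<beta>_def nb by simp
    also have "\<dots> = (1/q^2 - \<alpha>^2) / n" by (simp add: power2_eq_square algebra_simps)
    also have "\<dots> = -1/n" using q2 a2 by simp
    finally show ?thesis .
  qed
  have ww: "w b \<bullet> w b' = \<alpha>^2 * (if b = b' then 1 else 0) + (2 * \<alpha> * \<beta> + \<beta>^2 * n)"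
    if "b \<in> Basis" "b' \<in> Basis" for b b'
    unfolding w_def using that bs ss
    by (simp add: inner_add_left inner_add_right inner_Basis power2_eq_square algebra_simps)
  have wz: "w b \<bullet> z = -1/n" "z \<bullet> w b = -1/n" if "b \<in> Basis" for b
  proof -
    have "w b \<bullet> z = \<gamma> * (\<alpha> + \<beta> * n)" unfolding w_def z_def using that bs ss
      by (simp add: inner_add_left algebra_simps)
    also have "\<dots> = -1/n" unfolding \<gamma>_def \<beta>_def using n1 q2 qp
      by (simp add: field_simps power2_eq_square)
    finally show "w b \<bullet> z = -1/n" .
    then show "z \<bullet> w b = -1/n" by (simp add: inner_commute)
  qed
  have zz: "z \<bullet> z = 1" unfolding z_def \<gamma>_def using ss q2 qp n1
    by (simp add: power2_eq_square field_simps)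
  have wwd: "w b \<bullet> w b = 1" if "b \<in> Basis" for b
    using ww[OF that that] a2 key by simp
  have wwn: "w b \<bullet> w b' = -1/n" if "b \<in> Basis" "b' \<in> Basis" "b \<noteq> b'" for b b'
    using ww[OF that(1,2)] that(3) key by simp
  have neq: "-1/n \<noteq> 1" using n1 by (simp add: field_simps)
  have inj: "inj_on w Basis"
    by (intro inj_onI) (metis wwd wwn neq)
  have znot: "z \<notin> w ` Basis"
    using wz zz neq by force
  define V where "V = insert z (w ` Basis)"
  show ?thesis
  proof (intro exI[of _ V] conjI)
    show "finite V" unfolding V_def by simp
    show "card V = DIM('a) + 1" unfolding V_def using znot card_image[OF inj] by simp
    show "\<forall>x\<in>V. x \<bullet> x = 1" unfolding V_def using zz wwd by auto
    show "\<forall>x\<in>V. \<forall>y\<in>V. x \<noteq> y \<longrightarrow> x \<bullet> y = -1 / real DIM('a)"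
      unfolding V_def n_def[symmetric] using wz wwn by auto
  qed
qed

theorem theorem10p4:
  shows "(\<forall>S :: 'a::euclidean_space set. nondeg_simplex S \<and> S \<subseteq> cball 0 1 \<longrightarrow>
            absorption_index (cball 0 1) S \<ge> real DIM('a)
            \<and> (absorption_index (cball 0 1) S = real DIM('a)
                 \<longleftrightarrow> regular_simplex S \<and> inscribed_in_ball S))
      \<and> xi_n_ball TYPE('a) = real DIM('a)"
proof -
  have part1: "\<forall>S :: 'a set. nondeg_simplex S \<and> S \<subseteq> cball 0 1 \<longrightarrow>
            absorption_index (cball 0 1) S \<ge> real DIM('a)
            \<and> (absorption_index (cball 0 1) S = real DIM('a)
                 \<longleftrightarrow> regular_simplex S \<and> inscribed_in_ball S)"
  proof (intro allI impI)
    fix S :: "'a set" assume H: "nondeg_simplex S \<and> S \<subseteq> cball 0 1"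
    then obtain C where C: "\<not> affine_dependent C" "int (card C) = int DIM('a) + 1" "S = convex hull C"
      unfolding nondeg_simplex_def simplex_def by blast
    have cardC: "card C = DIM('a) + 1" using C(2) by simp
    obtain a where a: "dualfam C a" using dualfam_exists[OF C(1)] by blast
    interpret I: simp_setup C a by unfold_locales (use C(1) cardC a in auto)
    have sub: "C \<subseteq> cball 0 1" using H C(3) hull_subset[of C convex] by blast
    have NN: "I.N - 1 = real DIM('a)" unfolding I.N_def cardC by simp
    have ab: "absorption_index (cball 0 1) S = max 1 (Max (I.m ` C))" using I.absorb C(3) by simp
    show "absorption_index (cball 0 1) S \<ge> real DIM('a)
            \<and> (absorption_index (cball 0 1) S = real DIM('a)
                 \<longleftrightarrow> regular_simplex S \<and> inscribed_in_ball S)"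
    proof (rule conjI)
      show "absorption_index (cball 0 1) S \<ge> real DIM('a)" using I.lower[OF sub] ab NN by simp
    next
     show "absorption_index (cball 0 1) S = real DIM('a)
                 \<longleftrightarrow> regular_simplex S \<and> inscribed_in_ball S"
     proof
      assume "absorption_index (cball 0 1) S = real DIM('a)"
      then show "regular_simplex S \<and> inscribed_in_ball S" using I.eq_imp[OF sub] ab NN C(3) by simp
    next
      assume R: "regular_simplex S \<and> inscribed_in_ball S"
      have V: "simplex_vertices S = C" using I.verts C(3) by simp
      obtain d where d: "\<forall>x\<in>C. \<forall>y\<in>C. x \<noteq> y \<longrightarrow> dist x y = d"
        using R V unfolding regular_simplex_def by auto
      have n1: "\<forall>j\<in>C. norm j = 1" using R V unfolding inscribed_in_ball_def by auto
      obtain j0 where j0: "j0 \<in> C" using I.C_ne by auto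
      have "card C \<ge> 2" using cardC DIM_positive by (simp add: Suc_leI)
      have "\<not> C \<subseteq> {j0}"
      proof
        assume "C \<subseteq> {j0}"
        then have "card C \<le> 1" using card_mono[of "{j0}" C] by simp
        then show False using \<open>card C \<ge> 2\<close> by simp
      qed
      then obtain i0 where i0: "i0 \<in> C" "i0 \<noteq> j0" by auto
      have dpos: "d > 0" using d i0 j0 by (metis zero_less_dist_iff)
      define k where "k = 2 / d^2"
      have ip: "x \<bullet> y = 1 - d^2/2" if "x \<in> C" "y \<in> C" "x \<noteq> y" for x y
      proof -
        have "d = norm (x - y)" using d that by (simp add: dist_norm)
        then have "d^2 = (x - y) \<bullet> (x - y)" by (simp add: power2_norm_eq_inner)
        also have "\<dots> = x \<bullet> x - 2 * (x \<bullet> y) + y \<bullet> y"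
          by (simp add: inner_diff_left inner_diff_right inner_commute)
        finally have "d^2 = x \<bullet> x - 2 * (x \<bullet> y) + y \<bullet> y" .
        moreover have "x \<bullet> x = 1" "y \<bullet> y = 1" using n1 that by (auto simp: dot_square_norm)
        ultimately show ?thesis by (simp add: field_simps)
      qed
      have dual2: "dualfam C (\<lambda>j. k *\<^sub>R j)"
        unfolding dualfam_def
      proof (intro ballI impI)
        fix j i assume "j \<in> C" "i \<in> C" "i \<noteq> j"
        then have "j \<bullet> i = 1 - d^2/2" "j \<bullet> j = 1" using ip n1 by (auto simp: dot_square_norm)
        then show "k *\<^sub>R j \<bullet> (i - j) = -1" unfolding k_def using dpos
          by (simp add: inner_diff_right field_simps)
      qed
      interpret J: simp_setup C "\<lambda>j. k *\<^sub>R j" by unfold_locales (use C(1) cardC dual2 in auto)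
      have "absorption_index (cball 0 1) S = max 1 (Max (J.m ` C))" using J.absorb C(3) by simp
      also have "\<dots> = J.N - 1" using J.reg_imp[OF n1, of k] by simp
      also have "\<dots> = real DIM('a)" unfolding J.N_def cardC by simp
      finally show "absorption_index (cball 0 1) S = real DIM('a)" .
     qed
    qed
  qed
  have part2: "xi_n_ball TYPE('a) = real DIM('a)"
  proof -
    obtain V :: "'a set" where V: "finite V" "card V = DIM('a) + 1" "\<forall>x\<in>V. x \<bullet> x = 1"
      "\<forall>x\<in>V. \<forall>y\<in>V. x \<noteq> y \<longrightarrow> x \<bullet> y = -1 / real DIM('a)"
      using unit_config_exists by blast
    define n where "n = real DIM('a)"
    have n1: "n \<ge> 1" unfolding n_def by (simp add: DIM_positive Suc_leI)
    define k where "k = n / (n + 1)"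
    have dual: "dualfam V (\<lambda>j. k *\<^sub>R j)"
      unfolding dualfam_def
    proof (intro ballI impI)
      fix j i assume "j \<in> V" "i \<in> V" "i \<noteq> j"
      then have "j \<bullet> i = -1/n" "j \<bullet> j = 1" using V(3,4) unfolding n_def by auto
      then show "k *\<^sub>R j \<bullet> (i - j) = -1" unfolding k_def using n1
        by (simp add: inner_diff_right field_simps)
    qed
    have ind: "\<not> affine_dependent V" using dualfam_indep[OF V(1) dual] .
    interpret K: simp_setup V "\<lambda>j. k *\<^sub>R j" by unfold_locales (use ind V(2) dual in auto)
    have nV: "\<forall>j\<in>V. norm j = 1" using V(3) by (simp add: norm_eq_sqrt_inner)
    have ns: "nondeg_simplex (convex hull V)"
      unfolding nondeg_simplex_def simplex_def using ind V(2) by auto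
    have sub: "convex hull V \<subseteq> cball 0 1"
      using nV by (intro hull_minimal) (auto simp: convex_cball)
    have ab: "absorption_index (cball 0 1) (convex hull V) = real DIM('a)"
    proof -
      have "absorption_index (cball 0 1) (convex hull V) = max 1 (Max (K.m ` V))" using K.absorb .
      also have "\<dots> = K.N - 1" using K.reg_imp[OF nV, of k] by simp
      also have "\<dots> = real DIM('a)" unfolding K.N_def V(2) by simp
      finally show ?thesis .
    qed
    show ?thesis unfolding xi_n_ball_def
    proof (rule cInf_eq_minimum)
      show "real DIM('a) \<in> {absorption_index (cball (0::'a) 1) S |S. nondeg_simplex S \<and> S \<subseteq> cball 0 1}"
        using ab ns sub by force
    next
      fix x assume "x \<in> {absorption_index (cball (0::'a) 1) S |S. nondeg_simplex S \<and> S \<subseteq> cball 0 1}"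
      then show "real DIM('a) \<le> x" using part1 by force
    qed
  qed
  show ?thesis using part1 part2 by blast
qed

end
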